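(* Let $$B_1(x,y)=\frac{16-7x^2+8x-14xy+8y-7y^2}{16\sqrt{(2-x)(2-x-y)x}}.$$ If $0<y<x\le1$, then $B_1(x,y)>1$. *)

theory Defs
  imports Complex_Main
begin

definition B1 :: "real \<Rightarrow> real \<Rightarrow> real" where
  "B1 x y = (16 - 7*x^2 + 8*x - 14*x*y + 8*y - 7*y^2) / (16 * sqrt ((2 - x) * (2 - x - y) * x))"

end

theory Submission
  imports Defs
begin

lemma bern4: fixes u::real assumes "0\<le>u" "u\<le>1"
  shows "0 \<le> (1-u)^4" "0 \<le> u*(1-u)^3" "0 \<le> u^2*(1-u)^2" "0\<le> u^3*(1-u)" "0 \<le> u^4"
  using assms by auto
lemma polyB1: fixes t::real assumes "0\<le>t" "t\<le>1/2"
  shows "33 + 52*t - 202*t^2 + 84*t^3 + 49*t^4 > 0"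
proof -
  define u where "u = 2*t"
  have u: "0\<le>u" "u\<le>1" using assms u_def by auto
  have "33 + 52*t - 202*t^2 + 84*t^3 + 49*t^4 = 33*(1-u)^4 + 4*(79/2)*(u*(1-u)^3) + 6*(451/12)*(u^2*(1-u)^2) + 4*(239/8)*(u^3*(1-u)) + 353/16*u^4"
    unfolding u_def by algebra
  moreover have "0 < 33*(1-u)^4 + 353/16*u^4"
    using u by (cases "u = 0") (auto intro: add_pos_nonneg add_nonneg_pos)
  ultimately show ?thesis using bern4[OF u] by linarith
qed
lemma polyB2: fixes t::real assumes "1/2\<le>t" "t\<le>1"
  shows "33 + 52*t - 202*t^2 + 84*t^3 + 49*t^4 > 0"
proof -
  define u where "u = 2*t - 1"
  have u: "0\<le>u" "u\<le>1" using assms u_def by auto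
  have "33 + 52*t - 202*t^2 + 84*t^3 + 49*t^4 = 353/16*(1-u)^4 + 4*(57/4)*(u*(1-u)^3) + 6*(19/3)*(u^2*(1-u)^2) + 4*4*(u^3*(1-u)) + 16*u^4"
    unfolding u_def by algebra
  moreover have "0 < 353/16*(1-u)^4 + 16*u^4"
    using u by (cases "u = 0") (auto intro: add_pos_nonneg add_nonneg_pos)
  ultimately show ?thesis using bern4[OF u] by linarith
qed
lemma polyB: fixes s::real assumes "1\<le>s" "s\<le>2" shows "(16+8*s-7*s^2)^2 > 256*(2-s)"
proof -
  define t where "t = s - 1"
  have e: "(16+8*s-7*s^2)^2 - 256*(2-s) = 33 + 52*t - 202*t^2 + 84*t^3 + 49*t^4"
    unfolding t_def by (simp add: power2_eq_square power3_eq_cube power4_eq_xxxx algebra_simps)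
  have "33 + 52*t - 202*t^2 + 84*t^3 + 49*t^4 > 0"
    using polyB1[of t] polyB2[of t] assms t_def by linarith
  then show ?thesis using e by linarith
qed
lemma polyA: fixes s::real assumes "0\<le>s" "s\<le>1" shows "(16+8*s-7*s^2)^2 > 256*s*(2-s)^2"
proof -
  have "(16+8*s-7*s^2)^2 - 256*s*(2-s)^2 = 256*(1-s)^4 + 256*(s*(1-s)^3) + 96*(s^2*(1-s)^2) + 80*(s^3*(1-s)) + 33*s^4"
    by algebra
  moreover have "0 < 256*(1-s)^4 + 33*s^4"
    using assms by (cases "s = 0") (auto intro: add_pos_nonneg add_nonneg_pos)
  ultimately show ?thesis using bern4[OF assms] by linarith
qed

theorem lemma3:
  fixes x y :: real
  assumes "0 < y" and "y < x" and "x \<le> 1"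
  shows "B1 x y > 1"
proof -
  define s where "s = x + y"
  define N where "N = 16 - 7*x^2 + 8*x - 14*x*y + 8*y - 7*y^2"
  define P where "P = (2 - x) * (2 - x - y) * x"
  have Ns: "N = 16 + 8*s - 7*s^2" unfolding N_def s_def by (simp add: power2_eq_square algebra_simps)
  have s0: "0 < s" "s < 2" using assms unfolding s_def by auto
  have Pp: "0 < P" unfolding P_def using assms by (auto intro!: mult_pos_pos)
  have Npos: "N > 0"
  proof -
    have "s*s \<le> 2*s" using s0 by (intro mult_right_mono) auto
    then show ?thesis unfolding Ns power2_eq_square using s0 by linarith
  qed
  have Pe: "P = x*(2-x)*(2-s)" unfolding P_def s_def by (simp add: algebra_simps)
  have key: "256 * P < N^2"
  proof (cases "s \<le> 1")
    case True
    have "x*(2-x) \<le> s*(2-s)"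
    proof -
      have "x \<le> s" using assms s_def by simp
      then have "0 \<le> (s - x)*(2 - x - s)" using True assms by (intro mult_nonneg_nonneg) auto
      then show ?thesis by (simp add: algebra_simps)
    qed
    then have "x*(2-x)*(2-s) \<le> s*(2-s)*(2-s)" using s0 by (intro mult_right_mono) auto
    then have h: "256*P \<le> 256*s*(2-s)^2" unfolding Pe power2_eq_square by (simp add: mult.assoc)
    have "256*s*(2-s)^2 < N^2" unfolding Ns using polyA[of s] True s0 by simp
    then show ?thesis using h by linarith
  next
    case False
    have "0 \<le> (x-1)*(x-1)" by simp
    then have "x*(2-x) \<le> 1" by (simp add: algebra_simps)
    then have "x*(2-x)*(2-s) \<le> 1*(2-s)" using s0 by (intro mult_right_mono) auto
    then have h: "256*P \<le> 256*(2-s)" unfolding Pe by simp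
    have "256*(2-s) < N^2" unfolding Ns using polyB[of s] False s0 by simp
    then show ?thesis using h by linarith
  qed
  have "sqrt P < N/16"
  proof -
    have "sqrt P ^2 = P" using Pp by simp
    then have "(16 * sqrt P)^2 < N^2" using key by (simp add: power_mult_distrib)
    then have "16 * sqrt P < N" using Npos by (smt (verit) power_mono real_sqrt_ge_zero)
    then show ?thesis by simp
  qed
  then show ?thesis unfolding B1_def N_def[symmetric] P_def[symmetric]
    using Pp by (simp add: field_simps)
qed

end
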